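(* A POMDP $\Lambda=(Q,A,\delta,\Omega,O)$ has non-increasing entropy if and only if it is Dirac-preserving.
   Context: A POMDP is $\Lambda=(Q,A,\delta,\Omega,O)$ where $(Q,A,\delta)$ is an MDP ($Q,A$ finite non-empty, $\delta:Q\times A\to\mathcal D(Q)$), $\Omega$ a finite non-empty set of observations and $O:Q\to\Omega$. A belief is $b\in\mathcal D(Q)$; a state $q$ is identified with the Dirac belief on $q$. For $b\in\mathcal D(Q)$, $a\in A$, $o\in\Omega$: $p(b,a,o):=\sum_{q: O(q)=o}\sum_{q'\in Q}b(q')\delta(q',a)(q)$; $\mathrm{Comp}(b,a):=\{o: p(b,a,o)>0\}$; for $o\in\mathrm{Comp}(b,a)$, $\lambda[b,a,o](q):=0$ if $O(q)\ne o$ and $\lambda[b,a,o](q):=\sum_{q'}b(q')\delta(q',a)(q)/p(b,a,o)$ otherwise. $\Lambda$ is Dirac-preserving if for all $q\in Q$, $a\in A$, $o\in\mathrm{Comp}(q,a)$, $|\mathrm{Supp}(\lambda[q,a,o])|=1$. The entropy of $b$ is $H(b):=-\sum_q b(q)\log_2 b(q)$ (with $0\log 0=0$). $\Lambda$ has non-increasing entropy if for all $b\in\mathcal D(Q)$ and $a\in A$: $H(b)\ge\sum_{o\in\mathrm{Comp}(b,a)}p(b,a,o)\,H(\lambda[b,a,o])$. *)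

theory Defs
  imports "HOL-Probability.Probability_Mass_Function"
begin

text \<open>Beliefs are pmfs on 'q;
  a state q is identified with the Dirac belief return_pmf q.\<close>

definition obs_prob :: "('q::finite \<Rightarrow> 'a \<Rightarrow> 'q pmf) \<Rightarrow> ('q \<Rightarrow> 'obs) \<Rightarrow> 'q pmf \<Rightarrow> 'a \<Rightarrow> 'obs \<Rightarrow> real" where
  "obs_prob delta Obs b a ob =
     (\<Sum>q\<in>{q. Obs q = ob}. \<Sum>q'\<in>UNIV. pmf b q' * pmf (delta q' a) q)"

definition Comp :: "('q::finite \<Rightarrow> 'a \<Rightarrow> 'q pmf) \<Rightarrow> ('q \<Rightarrow> 'obs) \<Rightarrow> 'q pmf \<Rightarrow> 'a \<Rightarrow> 'obs set" where
  "Comp delta Obs b a = {ob. obs_prob delta Obs b a ob > 0}"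

definition bupdate :: "('q::finite \<Rightarrow> 'a \<Rightarrow> 'q pmf) \<Rightarrow> ('q \<Rightarrow> 'obs) \<Rightarrow> 'q pmf \<Rightarrow> 'a \<Rightarrow> 'obs \<Rightarrow> 'q \<Rightarrow> real" where
  "bupdate delta Obs b a ob q =
     (if Obs q \<noteq> ob then 0
      else (\<Sum>q'\<in>UNIV. pmf b q' * pmf (delta q' a) q) / obs_prob delta Obs b a ob)"

definition entropy :: "('q::finite \<Rightarrow> real) \<Rightarrow> real" where
  "entropy f = - (\<Sum>q\<in>UNIV. if f q = 0 then 0 else f q * log 2 (f q))"

definition dirac_preserving :: "('q::finite \<Rightarrow> 'a \<Rightarrow> 'q pmf) \<Rightarrow> ('q \<Rightarrow> 'obs) \<Rightarrow> bool" where
  "dirac_preserving delta Obs \<longleftrightarrow>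
     (\<forall>q a ob. ob \<in> Comp delta Obs (return_pmf q) a \<longrightarrow>
        card {x. bupdate delta Obs (return_pmf q) a ob x \<noteq> 0} = 1)"

definition nonincreasing_entropy :: "('q::finite \<Rightarrow> 'a \<Rightarrow> 'q pmf) \<Rightarrow> ('q \<Rightarrow> 'obs::finite) \<Rightarrow> bool" where
  "nonincreasing_entropy delta Obs \<longleftrightarrow>
     (\<forall>b a. entropy (pmf b) \<ge>
        (\<Sum>ob\<in>Comp delta Obs b a. obs_prob delta Obs b a ob * entropy (bupdate delta Obs b a ob)))"

end

theory Submission imports Defs begin

lemma pmf_sum1: "(\<Sum>x\<in>UNIV. pmf (M::'q::finite pmf) x) = 1"
  by (rule sum_pmf_eq_1) auto

definition mm :: "('q::finite \<Rightarrow> 'a \<Rightarrow> 'q pmf) \<Rightarrow> 'q pmf \<Rightarrow> 'a \<Rightarrow> 'q \<Rightarrow> real" where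
  "mm delta b a q = (\<Sum>q'\<in>UNIV. pmf b q' * pmf (delta q' a) q)"

lemma mm_nonneg: "mm delta b a q \<ge> 0"
  unfolding mm_def by (intro sum_nonneg) auto

lemma obs_prob_alt: "obs_prob delta Obs b a ob = (\<Sum>q\<in>UNIV. if Obs q = ob then mm delta b a q else 0)"
  unfolding obs_prob_def mm_def by (simp add: sum.If_cases)

lemma mm_le_obs: "mm delta b a q \<le> obs_prob delta Obs b a (Obs q)"
  unfolding obs_prob_def mm_def[symmetric]
  by (rule member_le_sum) (auto simp: mm_nonneg)

lemma sum_mm: "(\<Sum>q\<in>UNIV. mm delta b a q) = 1"
  unfolding mm_def by (subst sum.swap) (simp add: sum_distrib_left[symmetric] pmf_sum1)

lemma sum_obs: "(\<Sum>ob\<in>UNIV. obs_prob delta (Obs::'q::finite \<Rightarrow> 'obs::finite) b a ob) = 1"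
proof -
  have "(\<Sum>ob\<in>UNIV. obs_prob delta Obs b a ob) = (\<Sum>q\<in>UNIV. \<Sum>ob\<in>UNIV. if ob = Obs q then mm delta b a q else 0)"
    unfolding obs_prob_alt by (subst sum.swap) (simp add: eq_commute)
  also have "\<dots> = 1" using sum_mm by simp
  finally show ?thesis .
qed

lemma obs_nonneg: "obs_prob delta Obs b a ob \<ge> 0"
  unfolding obs_prob_alt by (intro sum_nonneg) (auto simp: mm_nonneg)

lemma bu_alt: "bupdate delta Obs b a ob q = (if Obs q \<noteq> ob then 0 else mm delta b a q / obs_prob delta Obs b a ob)"
  unfolding bupdate_def mm_def by simp

lemma bu_range: "0 \<le> bupdate delta Obs b a ob q \<and> bupdate delta Obs b a ob q \<le> 1"
proof (cases "Obs q = ob")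
  case True
  have "mm delta b a q \<le> obs_prob delta Obs b a ob" using mm_le_obs[of delta b a q Obs] True by simp
  then show ?thesis using True mm_nonneg[of delta b a q] obs_nonneg[of delta Obs b a ob]
    by (auto simp: bu_alt divide_le_eq_1)
qed (simp add: bu_alt)

lemma entropy_nonneg:
  assumes "\<And>q. 0 \<le> f q \<and> f q \<le> 1"
  shows "entropy f \<ge> 0"
proof -
  have "(\<Sum>q\<in>UNIV. if f q = 0 then 0 else f q * log 2 (f q)) \<le> 0"
  proof (intro sum_nonpos)
    fix q
    have "f q \<noteq> 0 \<Longrightarrow> log 2 (f q) \<le> 0" using assms[of q] by simp
    then show "(if f q = 0 then 0 else f q * log 2 (f q)) \<le> 0"
      using assms[of q] by (auto simp: mult_nonneg_nonpos)
  qed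
  then show ?thesis unfolding entropy_def by simp
qed

lemma entropy_pos:
  assumes "\<And>q. 0 \<le> f q \<and> f q \<le> 1" and "0 < f x" "f x < 1"
  shows "entropy f > 0"
proof -
  let ?g = "\<lambda>q. if f q = 0 then 0 else f q * log 2 (f q)"
  have le: "?g q \<le> 0" for q
  proof -
    have "f q \<noteq> 0 \<Longrightarrow> log 2 (f q) \<le> 0" using assms(1)[of q] by simp
    then show ?thesis using assms(1)[of q] by (auto simp: mult_nonneg_nonpos)
  qed
  have "log 2 (f x) < 0" using assms by simp
  then have lt: "?g x < 0" using assms by (simp add: mult_pos_neg)
  have "sum ?g UNIV = ?g x + sum ?g (UNIV - {x})"
    by (simp add: sum.remove)
  also have "sum ?g (UNIV - {x}) \<le> 0" by (intro sum_nonpos le)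
  finally have "sum ?g UNIV < 0" using lt by linarith
  then show ?thesis unfolding entropy_def by simp
qed

lemma entropy_dirac: "entropy (pmf (return_pmf q)) = 0"
proof -
  have "(if pmf (return_pmf q) x = 0 then 0 else pmf (return_pmf q) x * log 2 (pmf (return_pmf q) x)) = 0" for x
    by (cases "x = q") (auto simp: pmf_return)
  then show ?thesis unfolding entropy_def by simp
qed

lemma mm_return: "mm delta (return_pmf q) a x = pmf (delta q a) x"
  unfolding mm_def by (simp add: pmf_return indicator_def)

lemma sum_bu:
  assumes "ob \<in> Comp delta Obs b a"
  shows "(\<Sum>z\<in>UNIV. bupdate delta Obs b a ob z) = 1"
proof -
  have p: "obs_prob delta Obs b a ob > 0" using assms by (simp add: Comp_def)
  have "(\<Sum>z\<in>UNIV. bupdate delta Obs b a ob z) = (\<Sum>z\<in>UNIV. (if Obs z = ob then mm delta b a z else 0) / obs_prob delta Obs b a ob)"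
    by (intro sum.cong) (auto simp: bu_alt)
  also have "\<dots> = obs_prob delta Obs b a ob / obs_prob delta Obs b a ob"
    by (simp add: sum_divide_distrib[symmetric] obs_prob_alt[symmetric])
  finally show ?thesis using p by simp
qed

lemma ni_imp_dp:
  fixes delta :: "'q::finite \<Rightarrow> 'a \<Rightarrow> 'q pmf" and Obs :: "'q \<Rightarrow> 'obs::finite"
  assumes ni: "nonincreasing_entropy delta Obs"
  shows "dirac_preserving delta Obs"
proof (rule ccontr)
  assume "\<not> dirac_preserving delta Obs"
  then obtain q a ob where ob: "ob \<in> Comp delta Obs (return_pmf q) a"
    and c: "card {x. bupdate delta Obs (return_pmf q) a ob x \<noteq> 0} \<noteq> 1"
    unfolding dirac_preserving_def by blast
  define B where "B = return_pmf q"
  define bu where "bu = bupdate delta Obs B a ob"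
  define S where "S = {x. bu x \<noteq> 0}"
  have p: "obs_prob delta Obs B a ob > 0" using ob by (simp add: Comp_def B_def)
  have "\<exists>x. Obs x = ob \<and> mm delta B a x \<noteq> 0"
  proof (rule ccontr)
    assume "\<not> ?thesis"
    then have "obs_prob delta Obs B a ob = 0" unfolding obs_prob_alt by (intro sum.neutral) auto
    with p show False by simp
  qed
  then obtain x where x: "Obs x = ob" "mm delta B a x \<noteq> 0" by blast
  have xS: "x \<in> S" using x p by (simp add: S_def bu_def bu_alt)
  have "\<not> S \<subseteq> {x}"
  proof
    assume "S \<subseteq> {x}"
    then have "S = {x}" using xS by blast
    with c show False by (simp add: S_def bu_def B_def)
  qed
  then obtain y where yS: "y \<in> S" and yx: "y \<noteq> x" by blast
  have rng: "\<And>z. 0 \<le> bu z \<and> bu z \<le> 1" unfolding bu_def by (rule bu_range)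
  have "bu x + bu y = sum bu {x, y}" using yx by simp
  also have "\<dots> \<le> sum bu UNIV" by (rule sum_mono2) (auto simp: rng)
  also have "\<dots> = 1" unfolding bu_def B_def using sum_bu[OF ob] by simp
  finally have "bu x < 1" using yS rng[of y] by (auto simp: S_def)
  moreover have "bu x > 0" using xS rng[of x] by (auto simp: S_def)
  ultimately have epos: "entropy bu > 0" using entropy_pos[of bu x] rng by blast
  have "0 < obs_prob delta Obs B a ob * entropy (bupdate delta Obs B a ob)"
    using p epos bu_def by simp
  also have "\<dots> \<le> (\<Sum>o'\<in>Comp delta Obs B a. obs_prob delta Obs B a o' * entropy (bupdate delta Obs B a o'))"
    by (rule member_le_sum) (use ob B_def in \<open>auto intro!: mult_nonneg_nonneg obs_nonneg entropy_nonneg bu_range\<close>)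
  also have "\<dots> \<le> entropy (pmf B)" using ni unfolding nonincreasing_entropy_def by blast
  also have "\<dots> = 0" by (simp add: B_def entropy_dirac)
  finally show False by simp
qed

lemma dp_inj:
  assumes dp: "dirac_preserving delta Obs"
    and x: "pmf (delta q' a) x > 0" and y: "pmf (delta q' a) y > 0" and e: "Obs x = Obs y"
  shows "x = y"
proof -
  define ob where "ob = Obs x"
  have "0 < mm delta (return_pmf q') a x" using x by (simp add: mm_return)
  also have "\<dots> \<le> obs_prob delta Obs (return_pmf q') a ob" unfolding ob_def by (rule mm_le_obs)
  finally have p: "obs_prob delta Obs (return_pmf q') a ob > 0" .
  then have "ob \<in> Comp delta Obs (return_pmf q') a" by (simp add: Comp_def)
  with dp have c: "card {z. bupdate delta Obs (return_pmf q') a ob z \<noteq> 0} = 1"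
    unfolding dirac_preserving_def by blast
  then obtain c where cc: "{z. bupdate delta Obs (return_pmf q') a ob z \<noteq> 0} = {c}"
    by (rule card_1_singletonE)
  have "x \<in> {z. bupdate delta Obs (return_pmf q') a ob z \<noteq> 0}"
    using x p by (simp add: bu_alt mm_return ob_def)
  moreover have "y \<in> {z. bupdate delta Obs (return_pmf q') a ob z \<noteq> 0}"
    using y p e by (simp add: bu_alt mm_return ob_def)
  ultimately show ?thesis using cc by simp
qed

lemma dp_ineq:
  fixes delta :: "'q::finite \<Rightarrow> 'a \<Rightarrow> 'q pmf" and Obs :: "'q \<Rightarrow> 'obs::finite"
  assumes inj: "\<And>q' x y. pmf (delta q' a) x > 0 \<Longrightarrow> pmf (delta q' a) y > 0 \<Longrightarrow> Obs x = Obs y \<Longrightarrow> x = y"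
  shows "(\<Sum>ob\<in>Comp delta Obs b a. obs_prob delta Obs b a ob * entropy (bupdate delta Obs b a ob)) \<le> entropy (pmf b)"
proof -
  define P where "P q' q = pmf (delta q' a) q" for q' q
  define w where "w q' q = pmf b q' * P q' q" for q' q
  define m where "m = mm delta b a"
  define p where "p = obs_prob delta Obs b a"
  define C where "C = Comp delta Obs b a"
  have m_w: "m q = (\<Sum>q'\<in>UNIV. w q' q)" for q
    by (simp add: m_def mm_def w_def P_def)
  have w0: "w q' q \<ge> 0" for q' q by (simp add: w_def P_def)
  have mp: "m q \<le> p (Obs q)" for q unfolding m_def p_def by (rule mm_le_obs)
  have m0: "m q \<ge> 0" for q unfolding m_def by (rule mm_nonneg)
  have Cp: "ob \<in> C \<longleftrightarrow> p ob > 0" for ob by (simp add: C_def p_def Comp_def)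
  define L where "L q = (if m q = 0 then 0 else m q * log 2 (m q / p (Obs q)))" for q
  have step1: "p ob * entropy (bupdate delta Obs b a ob) = - (\<Sum>q\<in>UNIV. if ob = Obs q then L q else 0)"
    if "ob \<in> C" for ob
  proof -
    have pp: "p ob > 0" using that Cp by simp
    have "p ob * entropy (bupdate delta Obs b a ob) = - (\<Sum>q\<in>UNIV. p ob * (if bupdate delta Obs b a ob q = 0 then 0
       else bupdate delta Obs b a ob q * log 2 (bupdate delta Obs b a ob q)))"
      unfolding entropy_def by (simp add: sum_distrib_left)
    also have "\<dots> = - (\<Sum>q\<in>UNIV. if ob = Obs q then L q else 0)"
    proof (intro arg_cong[where f=uminus] sum.cong refl)
      fix q
      show "p ob * (if bupdate delta Obs b a ob q = 0 then 0
       else bupdate delta Obs b a ob q * log 2 (bupdate delta Obs b a ob q)) = (if ob = Obs q then L q else 0)"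
        using pp by (auto simp: bu_alt L_def m_def[symmetric] p_def[symmetric])
    qed
    finally show ?thesis .
  qed
  have step2: "(\<Sum>ob\<in>C. p ob * entropy (bupdate delta Obs b a ob)) = - (\<Sum>q\<in>UNIV. L q)"
  proof -
    have "(\<Sum>ob\<in>C. p ob * entropy (bupdate delta Obs b a ob)) = (\<Sum>ob\<in>C. - (\<Sum>q\<in>UNIV. if ob = Obs q then L q else 0))"
      by (intro sum.cong refl step1)
    also have "\<dots> = - (\<Sum>q\<in>UNIV. \<Sum>ob\<in>C. if ob = Obs q then L q else 0)"
      by (subst sum.swap) (simp add: sum_negf)
    also have "\<dots> = - (\<Sum>q\<in>UNIV. if Obs q \<in> C then L q else 0)"
      by simp
    also have "\<dots> = - (\<Sum>q\<in>UNIV. L q)"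
    proof (intro arg_cong[where f=uminus] sum.cong refl)
      fix q
      have "Obs q \<notin> C \<Longrightarrow> m q = 0" using Cp[of "Obs q"] mp[of q] m0[of q] by simp
      then show "(if Obs q \<in> C then L q else 0) = L q" by (auto simp: L_def)
    qed
    finally show ?thesis .
  qed
  have step3: "L q = (\<Sum>q'\<in>UNIV. w q' q * log 2 (m q / p (Obs q)))" for q
  proof (cases "m q = 0")
    case True
    then have "\<forall>q'\<in>UNIV. w q' q = 0" using m_w[of q] w0 by (simp add: sum_nonneg_eq_0_iff)
    then show ?thesis using True by (simp add: L_def)
  next
    case False
    then show ?thesis by (simp add: L_def m_w sum_distrib_right)
  qed
  have step4: "entropy (pmf b) = - (\<Sum>q'\<in>UNIV. \<Sum>q\<in>UNIV. w q' q * log 2 (pmf b q'))"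
  proof -
    have "(\<Sum>q\<in>UNIV. w q' q * log 2 (pmf b q')) = (if pmf b q' = 0 then 0 else pmf b q' * log 2 (pmf b q'))" for q'
    proof -
      have "(\<Sum>q\<in>UNIV. w q' q * log 2 (pmf b q')) = (\<Sum>q\<in>UNIV. P q' q) * (pmf b q' * log 2 (pmf b q'))"
        unfolding w_def sum_distrib_right by (intro sum.cong refl) (simp add: mult_ac)
      also have "(\<Sum>q\<in>UNIV. P q' q) = 1" unfolding P_def by (rule pmf_sum1)
      finally show ?thesis by simp
    qed
    then show ?thesis unfolding entropy_def by simp
  qed
  have key: "w q' q * log 2 (m q / p (Obs q)) - w q' q * log 2 (pmf b q') \<ge>
      (if w q' q > 0 then (w q' q - pmf b q' * p (Obs q)) / ln 2 else 0)" for q' q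
  proof (cases "w q' q > 0")
    case False
    then have "w q' q = 0" using w0[of q' q] by simp
    then show ?thesis by simp
  next
    case True
    have bpos: "pmf b q' > 0" using True pmf_nonneg[of b q'] by (auto simp: w_def P_def zero_less_mult_iff)
    have wm: "w q' q \<le> m q" unfolding m_w by (rule member_le_sum) (auto simp: w0)
    then have mpos: "m q > 0" using True by simp
    then have ppos: "p (Obs q) > 0" using mp[of q] by simp
    have "ln (pmf b q' * p (Obs q) / w q' q) \<le> pmf b q' * p (Obs q) / w q' q - 1"
      using bpos ppos True by (intro ln_le_minus_one) simp
    then have "ln (pmf b q') + ln (p (Obs q)) - ln (w q' q) \<le> pmf b q' * p (Obs q) / w q' q - 1"
      using bpos ppos True by (simp add: ln_div ln_mult)
    moreover have "ln (w q' q) \<le> ln (m q)" using wm True by simp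
    ultimately have "ln (m q) - ln (p (Obs q)) - ln (pmf b q') \<ge> 1 - pmf b q' * p (Obs q) / w q' q"
      by linarith
    then have "w q' q * (ln (m q) - ln (p (Obs q)) - ln (pmf b q')) \<ge> w q' q * (1 - pmf b q' * p (Obs q) / w q' q)"
      using True by (intro mult_left_mono) auto
    also have "w q' q * (1 - pmf b q' * p (Obs q) / w q' q) = w q' q - pmf b q' * p (Obs q)"
      using True by (simp add: field_simps)
    finally have A: "w q' q - pmf b q' * p (Obs q) \<le> w q' q * (ln (m q) - ln (p (Obs q)) - ln (pmf b q'))" .
    have "w q' q * log 2 (m q / p (Obs q)) - w q' q * log 2 (pmf b q') =
        w q' q * (ln (m q) - ln (p (Obs q)) - ln (pmf b q')) / ln 2"
      using mpos ppos bpos by (simp add: log_def ln_div field_simps)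
    then show ?thesis using A True by (simp add: divide_right_mono)
  qed
  have Sb: "(\<Sum>q\<in>UNIV. if w q' q > 0 then pmf b q' * p (Obs q) else 0) \<le> pmf b q'" for q'
  proof (cases "pmf b q' > 0")
    case False
    then have "pmf b q' = 0" using pmf_nonneg[of b q'] by simp
    then show ?thesis by (simp add: w_def)
  next
    case True
    define K where "K = {q. P q' q > 0}"
    have "(\<Sum>q\<in>UNIV. if w q' q > 0 then pmf b q' * p (Obs q) else 0) = pmf b q' * (\<Sum>q\<in>K. p (Obs q))"
      using True by (simp add: K_def w_def zero_less_mult_iff sum.If_cases sum_distrib_left Int_def)
    also have "(\<Sum>q\<in>K. p (Obs q)) = (\<Sum>o'\<in>Obs ` K. p o')"
    proof -
      have "inj_on Obs K" unfolding inj_on_def K_def P_def using inj by blast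
      then show ?thesis by (simp add: sum.reindex)
    qed
    also have "\<dots> \<le> (\<Sum>o'\<in>UNIV. p o')" by (rule sum_mono2) (auto simp: p_def obs_nonneg)
    also have "\<dots> = 1" unfolding p_def by (rule sum_obs)
    finally show ?thesis using True by simp
  qed
  have sumw: "(\<Sum>q'\<in>UNIV. \<Sum>q\<in>UNIV. if w q' q > 0 then w q' q else 0) = 1"
  proof -
    have "(\<Sum>q'\<in>UNIV. \<Sum>q\<in>UNIV. if w q' q > 0 then w q' q else 0) = (\<Sum>q'\<in>UNIV. \<Sum>q\<in>UNIV. w q' q)"
      using w0 by (intro sum.cong refl) (metis less_eq_real_def)
    also have "\<dots> = (\<Sum>q\<in>UNIV. m q)" by (subst sum.swap) (simp add: m_w)
    also have "\<dots> = 1" unfolding m_def by (rule sum_mm)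
    finally show ?thesis .
  qed
  have sumT: "0 \<le> (\<Sum>q'\<in>UNIV. \<Sum>q\<in>UNIV. if w q' q > 0 then (w q' q - pmf b q' * p (Obs q)) / ln 2 else 0)"
  proof -
    have "(\<Sum>q'\<in>UNIV. \<Sum>q\<in>UNIV. if w q' q > 0 then (w q' q - pmf b q' * p (Obs q)) / ln 2 else 0)
        = ((\<Sum>q'\<in>UNIV. \<Sum>q\<in>UNIV. if w q' q > 0 then w q' q else 0)
          - (\<Sum>q'\<in>UNIV. \<Sum>q\<in>UNIV. if w q' q > 0 then pmf b q' * p (Obs q) else 0)) / ln 2"
      by (simp add: sum_divide_distrib sum_subtractf[symmetric] if_distrib diff_divide_distrib if_distribR cong: if_cong)
    moreover have "(\<Sum>q'\<in>UNIV. \<Sum>q\<in>UNIV. if w q' q > 0 then pmf b q' * p (Obs q) else 0) \<le> 1"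
    proof -
      have "(\<Sum>q'\<in>UNIV. \<Sum>q\<in>UNIV. if w q' q > 0 then pmf b q' * p (Obs q) else 0) \<le> (\<Sum>q'\<in>UNIV. pmf b q')"
        by (intro sum_mono Sb)
      then show ?thesis by (simp add: pmf_sum1)
    qed
    ultimately show ?thesis using sumw by simp
  qed
  have "(\<Sum>q'\<in>UNIV. \<Sum>q\<in>UNIV. if w q' q > 0 then (w q' q - pmf b q' * p (Obs q)) / ln 2 else 0)
     \<le> (\<Sum>q'\<in>UNIV. \<Sum>q\<in>UNIV. w q' q * log 2 (m q / p (Obs q)) - w q' q * log 2 (pmf b q'))"
    by (intro sum_mono key)
  also have "\<dots> = (\<Sum>q\<in>UNIV. L q) + entropy (pmf b)"
    by (simp add: step3 step4 sum_subtractf) (subst sum.swap, simp)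
  finally have "- (\<Sum>q\<in>UNIV. L q) \<le> entropy (pmf b)" using sumT by linarith
  then show ?thesis using step2 by (simp add: C_def p_def)
qed

theorem mainTheorem10:
  fixes delta :: "'q::finite \<Rightarrow> 'a::finite \<Rightarrow> 'q pmf"
    and Obs :: "'q \<Rightarrow> 'obs::finite"
  shows "nonincreasing_entropy delta Obs \<longleftrightarrow> dirac_preserving delta Obs"
proof
  assume "nonincreasing_entropy delta Obs"
  then show "dirac_preserving delta Obs" by (rule ni_imp_dp)
next
  assume dp: "dirac_preserving delta Obs"
  show "nonincreasing_entropy delta Obs"
    unfolding nonincreasing_entropy_def
  proof (intro allI)
    fix b a
    show "(\<Sum>ob\<in>Comp delta Obs b a. obs_prob delta Obs b a ob * entropy (bupdate delta Obs b a ob)) \<le> entropy (pmf b)"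
      by (rule dp_ineq) (rule dp_inj[OF dp])
  qed
qed

end
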